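(* Let $L$ be a factorial $W^*$-lattice of type $I_n$. Then $|Min(L)|=|\mathbb R|$.
   Context: Orthocomplemented lattice (paper's convention): a set $L$ with a partial order $\le$ in which every subset has a supremum and an infimum ($l\vee l'$, $l\wedge l'$ denote binary sup/inf, $0=\inf L$, $1=\sup L$), such that: (continuity) for every increasing net $(l_i)$ and every $l$, $\bigvee_i(l\wedge l_i)=l\wedge\bigvee_i l_i$, and for every decreasing net $(l_i)$ and every $l$, $\bigwedge_i(l\vee l_i)=l\vee\bigwedge_i l_i$; (modularity) $l\le l''$ implies $(l\vee l')\wedge l''=l\vee(l'\wedge l'')$ for all $l'$; together with a map $l\mapsto l^\perp$, also written $1-l$, satisfying $l^{\perp\perp}=l$, $l\vee l^\perp=1$, $l\wedge l^\perp=0$, and $l\le l'\Rightarrow l'^\perp\le l^\perp$. For $l'\le l$ put $l-l'=(1-l')\wedge l$. Write $\perp(l)=\{l'\in L: l'\le 1-l\}$; elements of $\perp(l)$ are orthogonal to $l$; a family is mutually orthogonal if any two distinct members are orthogonal. $l$ commutes with $l'$ if $l=(l\wedge l')\vee(l\wedge l'^\perp)$; $c(l)$ is the set of elements commuting with $l$; $C(L)=\bigcap_{l\in L}c(l)$. $L$ is factorial if $C(L)=\{0,1\}$ and abelian if $C(L)=L$. For $l\in L$, $L\wedge l=\{l'\in L:l'\le l\}$ is an orthocomplemented lattice with complement $l'\mapsto l-l'$; $l$ is an abelian element if $L\wedge l$ is abelian. $L$ is an R-lattice if $C(L\wedge l)=\{c\wedge l: c\in C(L)\}$ for every $l\in L$.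 An element $l\ne 0$ is minimal if for every $l'\in L$ either $l\wedge l'=0$ or $l\wedge l'=l$; $Min(L)$ is the set of minimal elements and $Min(l)=\{m\in Min(L): m\le l\}$. Regular equivalence relation: for an equivalence relation $\sim$ on $L$ write $l\le_\sim l'$ if there is $l''\le l'$ with $l\sim l''$. $\sim$ is regular if: (1) $l\sim 0\iff l=0$; (2) $l\ge l'$ and $l\le_\sim l'$ imply $l\sim l'$; (3) for all $l,l'$, $l\le_\sim l'$ or $l'\le_\sim l$; (4) if $(l_i)$, $(l_i')$ are families of mutually orthogonal elements with $l_i\sim l_i'$ for all $i$, then $\bigvee_i l_i\sim\bigvee_i l_i'$; (5) $l'\le l$ and $l'\sim l$ imply $l'=l$. A family $(l_i)_{i\in I}$ is independent if for every partition $\{J,K\}$ of $I$, $\bigvee_{i\in J}l_i\wedge\bigvee_{i\in K}l_i=0$. A $\sim$-compatible dimension function is a map $D:L\to[0,1]$ with $D(0)=0$, $D(1)=1$, $D(l\vee l')+D(l\wedge l')=D(l)+D(l')$, $D(l)=D(l')\iff l\sim l'$, $D(l)\le D(l')\iff l\le_\sim l'$, and $D(\bigvee_i l_i)=\sum_i D(l_i)$ for every finite or countable independent family. A factorial R-lattice $L$ is of type $I_n$ if it carries a regular equivalence relation $\sim$ and a $\sim$-compatible dimension function $D$ with $D(L)=\{0,\frac1n,\dots,\frac{n-1}{n},1\}$. A factorial $W^*$-lattice of type $I_n$ is a factorial R-lattice of type $I_n$ whose cardinality equals that of $\mathbb R$. *)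

theory Defs
  imports "HOL-Analysis.Infinite_Sum" "HOL-Library.Equipollence"
begin

unbundle lattice_syntax

text \<open>The lattice L is the whole carrier of a type 'a of class complete_lattice
  (so every subset has a supremum Sup and infimum Inf; bot = 0, top = 1).\<close>

definition directed_set :: "'a::complete_lattice set \<Rightarrow> bool" where
  "directed_set S \<longleftrightarrow> S \<noteq> {} \<and> (\<forall>x\<in>S. \<forall>y\<in>S. \<exists>z\<in>S. x \<le> z \<and> y \<le> z)"

definition filtered_set :: "'a::complete_lattice set \<Rightarrow> bool" where
  "filtered_set S \<longleftrightarrow> S \<noteq> {} \<and> (\<forall>x\<in>S. \<forall>y\<in>S. \<exists>z\<in>S. z \<le> x \<and> z \<le> y)"

text \<open>Increasing (decreasing) nets are represented by their
  ranges, which are exactly the directed (filtered) subsets.\<close>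
definition ortho_lattice :: "('a::complete_lattice \<Rightarrow> 'a) \<Rightarrow> bool" where
  "ortho_lattice perp \<longleftrightarrow>
     (\<forall>(S::'a set) l. directed_set S \<longrightarrow> Sup ((\<lambda>s. l \<sqinter> s) ` S) = l \<sqinter> Sup S) \<and>
     (\<forall>(S::'a set) l. filtered_set S \<longrightarrow> Inf ((\<lambda>s. l \<squnion> s) ` S) = l \<squnion> Inf S) \<and>
     (\<forall>(l::'a) l' l''. l \<le> l'' \<longrightarrow> (l \<squnion> l') \<sqinter> l'' = l \<squnion> (l' \<sqinter> l'')) \<and>
     (\<forall>l. perp (perp l) = l) \<and>
     (\<forall>l. l \<squnion> perp l = top) \<and>
     (\<forall>l. l \<sqinter> perp l = bot) \<and>
     (\<forall>l l'. l \<le> l' \<longrightarrow> perp l' \<le> perp l)"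

definition ominus :: "('a::complete_lattice \<Rightarrow> 'a) \<Rightarrow> 'a \<Rightarrow> 'a \<Rightarrow> 'a" where
  "ominus perp l l' = perp l' \<sqinter> l"

definition commutes :: "('a::complete_lattice \<Rightarrow> 'a) \<Rightarrow> 'a \<Rightarrow> 'a \<Rightarrow> bool" where
  "commutes perp a b \<longleftrightarrow> a = (a \<sqinter> b) \<squnion> (a \<sqinter> perp b)"

definition commutant :: "('a::complete_lattice \<Rightarrow> 'a) \<Rightarrow> 'a \<Rightarrow> 'a set" where
  "commutant perp l = {l'. commutes perp l' l}"

definition centre :: "('a::complete_lattice \<Rightarrow> 'a) \<Rightarrow> 'a set" where
  "centre perp = (\<Inter>l. commutant perp l)"

text \<open>Centre of the sublattice L \<sqinter> u = {l. l \<le> u}, whose complement is l \<mapsto> u - l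
  and whose lattice operations are those of L.\<close>
definition centre_below :: "('a::complete_lattice \<Rightarrow> 'a) \<Rightarrow> 'a \<Rightarrow> 'a set" where
  "centre_below perp u =
     (\<Inter>l\<in>{l. l \<le> u}. {l'. l' \<le> u \<and> l' = (l' \<sqinter> l) \<squnion> (l' \<sqinter> ominus perp u l)})"

definition factorial :: "('a::complete_lattice \<Rightarrow> 'a) \<Rightarrow> bool" where
  "factorial perp \<longleftrightarrow> centre perp = {bot, top}"

definition R_lattice :: "('a::complete_lattice \<Rightarrow> 'a) \<Rightarrow> bool" where
  "R_lattice perp \<longleftrightarrow> ortho_lattice perp \<and>
     (\<forall>l. centre_below perp l = (\<lambda>c. c \<sqinter> l) ` centre perp)"

definition minimal_elems :: "'a::complete_lattice set" where
  "minimal_elems = {l. l \<noteq> bot \<and> (\<forall>l'. l \<sqinter> l' = bot \<or> l \<sqinter> l' = l)}"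

definition le_sim :: "('a::complete_lattice \<Rightarrow> 'a \<Rightarrow> bool) \<Rightarrow> 'a \<Rightarrow> 'a \<Rightarrow> bool" where
  "le_sim sim l l' \<longleftrightarrow> (\<exists>l''. l'' \<le> l' \<and> sim l l'')"

definition mutually_orth :: "('a::complete_lattice \<Rightarrow> 'a) \<Rightarrow> ('i \<Rightarrow> 'a) \<Rightarrow> 'i set \<Rightarrow> bool" where
  "mutually_orth perp f I \<longleftrightarrow> (\<forall>i\<in>I. \<forall>j\<in>I. i \<noteq> j \<longrightarrow> f i \<le> perp (f j))"

text \<open>Regular equivalence relation. Families in (4) are indexed by subsets of the
  lattice's own type.\<close>
definition regular_equiv :: "('a::complete_lattice \<Rightarrow> 'a) \<Rightarrow> ('a \<Rightarrow> 'a \<Rightarrow> bool) \<Rightarrow> bool" where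
  "regular_equiv perp sim \<longleftrightarrow> equivp sim \<and>
     (\<forall>l. sim l bot \<longleftrightarrow> l = bot) \<and>
     (\<forall>l l'. l' \<le> l \<and> le_sim sim l l' \<longrightarrow> sim l l') \<and>
     (\<forall>l l'. le_sim sim l l' \<or> le_sim sim l' l) \<and>
     (\<forall>(I::'a set) f g. mutually_orth perp f I \<and> mutually_orth perp g I \<and>
          (\<forall>i\<in>I. sim (f i) (g i)) \<longrightarrow> sim (Sup (f ` I)) (Sup (g ` I))) \<and>
     (\<forall>l l'. l' \<le> l \<and> sim l' l \<longrightarrow> l' = l)"

definition independent_family :: "('i \<Rightarrow> 'a::complete_lattice) \<Rightarrow> 'i set \<Rightarrow> bool" where
  "independent_family f I \<longleftrightarrow>
     (\<forall>J K. J \<union> K = I \<and> J \<inter> K = {} \<longrightarrow> Sup (f ` J) \<sqinter> Sup (f ` K) = bot)"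

text \<open>sim-compatible dimension function; finite or countable families are indexed by
  subsets of nat.\<close>
definition dimension_function ::
    "('a::complete_lattice \<Rightarrow> 'a \<Rightarrow> bool) \<Rightarrow> ('a \<Rightarrow> real) \<Rightarrow> bool" where
  "dimension_function sim D \<longleftrightarrow>
     (\<forall>l. 0 \<le> D l \<and> D l \<le> 1) \<and> D bot = 0 \<and> D top = 1 \<and>
     (\<forall>l l'. D (l \<squnion> l') + D (l \<sqinter> l') = D l + D l') \<and>
     (\<forall>l l'. D l = D l' \<longleftrightarrow> sim l l') \<and>
     (\<forall>l l'. D l \<le> D l' \<longleftrightarrow> le_sim sim l l') \<and>
     (\<forall>(I::nat set) f. independent_family f I \<longrightarrow>
          ((\<lambda>i. D (f i)) has_sum D (Sup (f ` I))) I)"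

definition factorial_R_lattice_type_I :: "('a::complete_lattice \<Rightarrow> 'a) \<Rightarrow> nat \<Rightarrow> bool" where
  "factorial_R_lattice_type_I perp n \<longleftrightarrow>
     R_lattice perp \<and> factorial perp \<and> n \<ge> 1 \<and>
     (\<exists>sim D. regular_equiv perp sim \<and> dimension_function sim D \<and>
        range D = {real k / real n | k. k \<le> n})"

definition factorial_W_lattice_type_I :: "('a::complete_lattice \<Rightarrow> 'a) \<Rightarrow> nat \<Rightarrow> bool" where
  "factorial_W_lattice_type_I perp n \<longleftrightarrow>
     factorial_R_lattice_type_I perp n \<and> (UNIV :: 'a set) \<approx> (UNIV :: real set)"

end

theory Submission
  imports Defs
begin

lemma times_self_lepoll_inf:
  assumes "infinite (B::'b set)" shows "B \<times> B \<lesssim> B"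
proof -
  have "B \<times> B \<approx> B"
    using assms by (simp add: eqpoll_iff_card_of_ordIso card_of_Times_same_infinite)
  thus ?thesis by (simp add: eqpoll_imp_lepoll)
qed

lemma lists_len_lepoll:
  assumes "infinite (B::'b set)"
  shows "{xs. set xs \<subseteq> B \<and> length xs = k} \<lesssim> B"
proof (induction k)
  case 0
  obtain b where b: "b \<in> B" using assms by (metis ex_in_conv finite.emptyI)
  have "{xs. set xs \<subseteq> B \<and> length xs = 0} = {[]}" by auto
  moreover have "{[]} \<lesssim> B" unfolding lepoll_def
    by (rule exI[of _ "\<lambda>_. b"]) (auto simp: b)
  ultimately show ?case by simp
next
  case (Suc k)
  let ?S = "{xs. set xs \<subseteq> B \<and> length xs = k}"
  have "{xs. set xs \<subseteq> B \<and> length xs = Suc k} \<subseteq> (\<lambda>(x,xs). x#xs) ` (B \<times> ?S)"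
  proof
    fix xs assume "xs \<in> {xs. set xs \<subseteq> B \<and> length xs = Suc k}"
    then obtain y ys where "xs = y # ys" "y \<in> B" "ys \<in> ?S"
      by (cases xs) auto
    thus "xs \<in> (\<lambda>(x,xs). x#xs) ` (B \<times> ?S)" by force
  qed
  hence "{xs. set xs \<subseteq> B \<and> length xs = Suc k} \<lesssim> B \<times> ?S"
    by (meson image_lepoll lepoll_trans subset_imp_lepoll)
  also have "B \<times> ?S \<lesssim> B \<times> B"
    using Suc by (simp add: times_lepoll_mono lepoll_refl)
  also have "B \<times> B \<lesssim> B" using times_self_lepoll_inf[OF assms] .
  finally show ?case .
qed

lemma decomp:
  fixes perp :: "'a::complete_lattice \<Rightarrow> 'a" and n :: nat
  assumes ol: "ortho_lattice perp" and re: "regular_equiv perp sim"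
    and df: "dimension_function sim D" and n: "n \<ge> 1"
    and int: "\<And>l. \<exists>j::nat. D l * real n = real j"
  shows "D l * real n = real k \<Longrightarrow>
     \<exists>F. finite F \<and> F \<subseteq> minimal_elems \<and> card F \<le> k \<and> Sup F = l"
proof (induction k arbitrary: l rule: less_induct)
  case (less k l)
  have D0: "D bot = 0" and Dnn: "\<And>l. 0 \<le> D l" using df unfolding dimension_function_def by auto
  have Dmod: "\<And>a b. D (a \<squnion> b) + D (a \<sqinter> b) = D a + D b"
    using df unfolding dimension_function_def by auto
  have Dpos: "\<And>a. a \<noteq> bot \<Longrightarrow> D a > 0"
  proof -
    fix a :: 'a assume a: "a \<noteq> bot"
    have "D a = D bot \<longleftrightarrow> sim a bot" using df unfolding dimension_function_def by blast
    moreover have "\<forall>l. sim l bot \<longleftrightarrow> l = bot" using re unfolding regular_equiv_def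
      by (elim conjE) assumption
    hence "sim a bot \<longleftrightarrow> a = bot" by blast
    ultimately have "D a \<noteq> 0" using a D0 by simp
    thus "D a > 0" using Dnn[of a] by simp
  qed
  have H: "(\<forall>(a::'a) b c. a \<le> c \<longrightarrow> (a \<squnion> b) \<sqinter> c = a \<squnion> (b \<sqinter> c)) \<and>
     (\<forall>a. a \<squnion> perp a = top) \<and> (\<forall>a. a \<sqinter> perp a = bot)"
    using ol unfolding ortho_lattice_def by (elim conjE) (intro conjI)
  have modu: "\<And>(a::'a) b c. a \<le> c \<Longrightarrow> (a \<squnion> b) \<sqinter> c = a \<squnion> (b \<sqinter> c)"
    using H by blast
  have compl1: "\<And>a. a \<squnion> perp a = top" using H by blast
  have compl2: "\<And>a. a \<sqinter> perp a = bot" using H by blast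
  show ?case
  proof (cases "l = bot")
    case True thus ?thesis by (intro exI[of _ "{}"]) auto
  next
    case lnb: False
    show ?thesis
    proof (cases "l \<in> minimal_elems")
      case True
      have "D l * real n > 0" using Dpos[OF lnb] n by simp
      hence "k \<ge> 1" using less.prems by simp
      thus ?thesis using True by (intro exI[of _ "{l}"]) auto
    next
      case False
      then obtain l' where "l \<sqinter> l' \<noteq> bot" "l \<sqinter> l' \<noteq> l"
        using lnb unfolding minimal_elems_def by auto
      define x where "x = l \<sqinter> l'"
      define y where "y = perp x \<sqinter> l"
      have xb: "x \<noteq> bot" and xl: "x \<noteq> l" and xle: "x \<le> l"
        using \<open>l \<sqinter> l' \<noteq> bot\<close> \<open>l \<sqinter> l' \<noteq> l\<close> by (auto simp: x_def)
      have lxy: "l = x \<squnion> y"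
        using modu[OF xle, of "perp x"] compl1[of x] by (simp add: y_def)
      have xy: "x \<sqinter> y = bot"
      proof -
        have "x \<sqinter> y \<le> x \<sqinter> perp x" unfolding y_def by (meson inf_le1 inf_le2 le_inf_iff order_trans)
        thus ?thesis using compl2[of x] by (simp add: bot_unique)
      qed
      have yb: "y \<noteq> bot" using lxy xl by auto
      have sum: "D l = D x + D y" using Dmod[of x y] lxy xy D0 by simp
      obtain jx where jx: "D x * real n = real jx" using int by blast
      obtain jy where jy: "D y * real n = real jy" using int by blast
      have "real k = real jx + real jy" using less.prems sum jx jy by (simp add: algebra_simps)
      hence kk: "k = jx + jy" by linarith
      have "D x * real n > 0" using Dpos[OF xb] n by simp
      hence "real jx > 0" using jx by simp
      moreover have "D y * real n > 0" using Dpos[OF yb] n by simp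
      hence "real jy > 0" using jy by simp
      ultimately have "jx < k" "jy < k" using kk by auto
      obtain Fx where Fx: "finite Fx" "Fx \<subseteq> minimal_elems" "card Fx \<le> jx" "Sup Fx = x"
        using less.IH[OF \<open>jx < k\<close> jx] by blast
      obtain Fy where Fy: "finite Fy" "Fy \<subseteq> minimal_elems" "card Fy \<le> jy" "Sup Fy = y"
        using less.IH[OF \<open>jy < k\<close> jy] by blast
      have "card (Fx \<union> Fy) \<le> k" using card_Un_le[of Fx Fy] Fx Fy kk by linarith
      moreover have "Sup (Fx \<union> Fy) = l" using Fx Fy lxy by (simp add: Sup_union_distrib)
      ultimately show ?thesis using Fx Fy by (intro exI[of _ "Fx \<union> Fy"]) auto
    qed
  qed
qed

theorem mainTheorem5:
  fixes perp :: "'a::complete_lattice \<Rightarrow> 'a" and n :: nat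
  assumes "factorial_W_lattice_type_I perp n"
  shows "(minimal_elems :: 'a set) \<approx> (UNIV :: real set)"
proof -
  from assms obtain sim D where ol: "ortho_lattice perp" and n: "n \<ge> 1"
    and re: "regular_equiv perp sim" and df: "dimension_function sim D"
    and rD: "range D = {real k / real n | k. k \<le> n}"
    and card: "(UNIV :: 'a set) \<approx> (UNIV :: real set)"
    unfolding factorial_W_lattice_type_I_def factorial_R_lattice_type_I_def R_lattice_def
    by blast
  have int: "\<exists>j::nat. D l * real n = real j \<and> j \<le> n" for l
  proof -
    have "D l \<in> range D" by simp
    then obtain j where "D l = real j / real n" "j \<le> n" using rD by auto
    thus ?thesis using n by (intro exI[of _ j]) simp
  qed
  define B where "B = insert (bot::'a) minimal_elems"
  have rep: "\<exists>xs. set xs \<subseteq> B \<and> length xs = n \<and> Sup (set xs) = l" for l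
  proof -
    obtain j where j: "D l * real n = real j" "j \<le> n" using int by blast
    obtain F where F: "finite F" "F \<subseteq> minimal_elems" "card F \<le> j" "Sup F = l"
      using decomp[OF ol re df n, of l j] int j(1) by blast
    obtain ys where ys: "set ys = F" "distinct ys" using finite_distinct_list[OF F(1)] by blast
    have ly: "length ys \<le> n" using ys F j distinct_card by fastforce
    define xs where "xs = ys @ replicate (n - length ys) bot"
    have "set xs \<subseteq> B" using ys F by (auto simp: xs_def B_def)
    moreover have "length xs = n" using ly by (simp add: xs_def)
    moreover have "Sup (set xs) = l"
    proof -
      have r: "Sup (set (replicate (n - length ys) (bot::'a))) = bot"
        by (cases "n - length ys = 0") auto
      have "Sup (set xs) = Sup (set ys) \<squnion> Sup (set (replicate (n - length ys) (bot::'a)))"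
        by (simp only: xs_def set_append Sup_union_distrib)
      also have "\<dots> = Sup (set ys)" by (simp only: r sup_bot_right)
      finally show ?thesis using ys F by simp
    qed
    ultimately show ?thesis by blast
  qed
  let ?S = "{xs. set xs \<subseteq> B \<and> length xs = n}"
  have "(UNIV::'a set) \<subseteq> (\<lambda>xs. Sup (set xs)) ` ?S" 
  proof
    fix l :: 'a
    obtain xs where "set xs \<subseteq> B" "length xs = n" "Sup (set xs) = l" using rep by blast
    thus "l \<in> (\<lambda>xs. Sup (set xs)) ` ?S" by (intro image_eqI[of _ _ xs]) auto
  qed
  hence U: "(UNIV::'a set) \<lesssim> ?S"
    by (meson image_lepoll lepoll_trans subset_imp_lepoll)
  have infU: "infinite (UNIV::'a set)"
    using card eqpoll_finite_iff infinite_UNIV_char_0 by blast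
  have infB: "infinite B"
  proof
    assume "finite B"
    hence "finite ?S" using finite_lists_length_eq by blast
    moreover have "infinite ?S" using infU U by (meson infinite_le_lepoll lepoll_trans)
    ultimately show False by simp
  qed
  hence infM: "infinite (minimal_elems::'a set)" by (simp add: B_def)
  have "(UNIV::real set) \<lesssim> (UNIV::'a set)" by (rule eqpoll_imp_lepoll[OF eqpoll_sym[OF card]])
  also have "(UNIV::'a set) \<lesssim> B" by (rule lepoll_trans[OF U lists_len_lepoll[OF infB]])
  also have "B \<lesssim> (minimal_elems::'a set)"
  proof -
    have "B \<approx> (minimal_elems::'a set)" unfolding B_def using infM by (rule infinite_insert_eqpoll)
    thus ?thesis by (rule eqpoll_imp_lepoll)
  qed
  finally have a: "(UNIV::real set) \<lesssim> (minimal_elems::'a set)" .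
  have "(minimal_elems::'a set) \<lesssim> (UNIV::real set)"
    by (rule lepoll_trans[OF subset_imp_lepoll[OF subset_UNIV] eqpoll_imp_lepoll[OF card]])
  thus ?thesis using a by (rule lepoll_antisym)
qed

end
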